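(* Let $X=(X_1,\dots,X_n)$ be a random vector in $\mathcal{X}^n$ whose distribution is exchangeable, let $T:\mathcal{X}^n\to\mathbb{R}$ be a fixed (measurable) function, and let $q$ be any probability distribution on $\mathcal{S}_n$. Let $M\ge1$ and draw $\sigma_0,\sigma_1,\dots,\sigma_M$ i.i.d. from $q$, independently of $X$. Define $$\bar P=\frac{\sum_{m=0}^M\sum_{m'=0}^M\mathbf{1}\{T(X_{\sigma_m\circ\sigma_{m'}^{-1}})\ge T(X)\}}{(1+M)^2}.$$ Then $\mathbb{P}\{\bar P\le\alpha\}\le2\alpha$ for all $\alpha\in[0,1]$.
   Context: $\mathcal{S}_n$ denotes the set (group) of all permutations of $[n]=\{1,\dots,n\}$. For $x\in\mathcal{X}^n$ and $\sigma\in\mathcal{S}_n$, $x_\sigma:=(x_{\sigma(1)},\dots,x_{\sigma(n)})$. $X$ is exchangeable means $X\stackrel{d}{=}X_\pi$ for every fixed $\pi\in\mathcal{S}_n$. *)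

theory Defs
  imports "HOL-Probability.Probability" "HOL-Combinatorics.Permutations"
begin

text \<open>Vectors in X^n are modelled as extensional functions on the index set {..<n}
  (elements of PiM {..<n} (\<lambda>_. N)); permutations of [n] as functions nat \<Rightarrow> nat
  that permute {..<n}.  x_sigma = (x (sigma 0), ..., x (sigma (n-1))).\<close>

definition permute_vec :: "(nat \<Rightarrow> nat) \<Rightarrow> (nat \<Rightarrow> 'a) \<Rightarrow> (nat \<Rightarrow> 'a)" where
  "permute_vec \<sigma> x = (\<lambda>i. x (\<sigma> i))"

definition exchangeable_rv ::
  "'w measure \<Rightarrow> nat \<Rightarrow> 'a measure \<Rightarrow> ('w \<Rightarrow> nat \<Rightarrow> 'a) \<Rightarrow> bool" where
  "exchangeable_rv P n N X \<longleftrightarrow>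
     (\<forall>\<pi>. \<pi> permutes {..<n} \<longrightarrow>
        distr P (PiM {..<n} (\<lambda>_. N)) (\<lambda>\<omega>. permute_vec \<pi> (X \<omega>))
          = distr P (PiM {..<n} (\<lambda>_. N)) X)"

end

theory Submission
  imports Defs
begin


lemma sum_ind_card: "finite I \<Longrightarrow> (\<Sum>j\<in>I. (if P j then 1 else 0::real)) = real (card {j\<in>I. P j})"
  by (simp add: sum.If_cases Int_def)

lemma step_ineq:
  fixes \<beta> c :: real
  shows "max 0 (\<beta> - c) - (max 0 (\<beta> - (c - 1)))\<^sup>2/2 \<le> - (max 0 (\<beta> - c))\<^sup>2/2"
proof (cases "\<beta> - c \<le> 0")
  case True
  then show ?thesis by simp
next
  case False
  then have e: "max 0 (\<beta> - c) = \<beta> - c" "max 0 (\<beta> - (c - 1)) = (\<beta> - c) + 1" by auto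
  have "(\<beta> - c) - ((\<beta> - c) + 1)\<^sup>2/2 \<le> - (\<beta> - c)\<^sup>2/2"
    by (simp add: power2_eq_square field_simps)
  then show ?thesis unfolding e .
qed

lemma rank_sum_bound:
  fixes w :: "'i \<Rightarrow> real"
  assumes "finite I" "\<beta> \<ge> 0"
  shows "(\<Sum>m\<in>I. max 0 (\<beta> - real (card {j\<in>I. w m \<le> w j})))
          \<le> \<beta>\<^sup>2/2 - (max 0 (\<beta> - real (card I)))\<^sup>2/2"
  using assms(1)
proof (induction "card I" arbitrary: I)
  case 0
  then show ?case using assms(2) by simp
next
  case (Suc k)
  then have ne: "I \<noteq> {}" by auto
  obtain m0 where m0: "m0 \<in> I" "\<And>j. j \<in> I \<Longrightarrow> w m0 \<le> w j"
  proof -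
    have "Min (w ` I) \<in> w ` I" using Suc.prems ne by simp
    then obtain m0 where "m0 \<in> I" "w m0 = Min (w ` I)" by auto
    moreover have "\<And>j. j \<in> I \<Longrightarrow> Min (w ` I) \<le> w j" using Suc.prems by simp
    ultimately show ?thesis using that by metis
  qed
  let ?J = "I - {m0}"
  have cJ: "card ?J = k" using Suc m0 by simp
  have fJ: "finite ?J" using Suc by simp
  have IH: "(\<Sum>m\<in>?J. max 0 (\<beta> - real (card {j\<in>?J. w m \<le> w j})))
          \<le> \<beta>\<^sup>2/2 - (max 0 (\<beta> - real k))\<^sup>2/2"
    using Suc.hyps(1)[of ?J] cJ fJ by simp
  have "{j\<in>I. w m0 \<le> w j} = I" using m0 by auto
  then have r0: "card {j\<in>I. w m0 \<le> w j} = card I" by simp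
  have mono: "max 0 (\<beta> - real (card {j\<in>I. w m \<le> w j})) \<le> max 0 (\<beta> - real (card {j\<in>?J. w m \<le> w j}))"
    if "m \<in> ?J" for m
  proof -
    have "card {j\<in>?J. w m \<le> w j} \<le> card {j\<in>I. w m \<le> w j}"
      by (rule card_mono) (use Suc.prems in auto)
    then show ?thesis by simp
  qed
  have "(\<Sum>m\<in>I. max 0 (\<beta> - real (card {j\<in>I. w m \<le> w j})))
     = max 0 (\<beta> - real (card I)) + (\<Sum>m\<in>?J. max 0 (\<beta> - real (card {j\<in>I. w m \<le> w j})))"
    using Suc.prems m0 r0 by (simp add: sum.remove)
  also have "\<dots> \<le> max 0 (\<beta> - real (card I)) + (\<Sum>m\<in>?J. max 0 (\<beta> - real (card {j\<in>?J. w m \<le> w j})))"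
    by (intro add_left_mono sum_mono mono)
  also have "\<dots> \<le> max 0 (\<beta> - real (card I)) + (\<beta>\<^sup>2/2 - (max 0 (\<beta> - real k))\<^sup>2/2)"
    using IH by simp
  also have "\<dots> \<le> \<beta>\<^sup>2/2 - (max 0 (\<beta> - real (card I)))\<^sup>2/2"
  proof -
    have "real k = real (card I) - 1" using Suc.hyps(2) by simp
    then show ?thesis using step_ineq[of \<beta> "real (card I)"] by simp
  qed
  finally show ?case .
qed



lemma pv_comp: "permute_vec a (permute_vec b x) = permute_vec (b \<circ> a) x"
  by (simp add: permute_vec_def)

lemma pv_id: "permute_vec id x = x"
  by (simp add: permute_vec_def)

lemma pv_meas:
  fixes N :: "'a measure"
  assumes "g permutes {..<n}"
  shows "permute_vec g \<in> PiM {..<n} (\<lambda>_. N) \<rightarrow>\<^sub>M PiM {..<n} (\<lambda>_. N)"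
proof -
  have gi: "i < n \<Longrightarrow> g i < n" for i using assms
    using permutes_in_image[OF assms, of i] by simp
  have go: "\<not> i < n \<Longrightarrow> g i = i" for i using assms
    by (simp add: permutes_def)
  have "(\<lambda>\<omega> i. (\<lambda>i \<omega>. \<omega> (g i)) i \<omega>) \<in> PiM {..<n} (\<lambda>_. N) \<rightarrow>\<^sub>M PiM {..<n} (\<lambda>_. N)"
  proof (rule measurable_PiM_single')
    fix i assume "i \<in> {..<n}"
    then show "(\<lambda>i \<omega>. \<omega> (g i)) i \<in> PiM {..<n} (\<lambda>_. N) \<rightarrow>\<^sub>M N"
      using gi by (auto intro!: measurable_component_singleton)
  next
    show "(\<lambda>\<omega> i. (\<lambda>i \<omega>. \<omega> (g i)) i \<omega>) \<in> space (PiM {..<n} (\<lambda>_. N)) \<rightarrow> (\<Pi>\<^sub>E i\<in>{..<n}. space N)"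
      using gi go by (auto simp: space_PiM PiE_iff extensional_def)
  qed
  moreover have "permute_vec g = (\<lambda>(\<omega>::nat\<Rightarrow>'a) i. \<omega> (g i))" by (rule ext) (simp add: permute_vec_def)
  ultimately show ?thesis by simp
qed




definition pbar :: "((nat \<Rightarrow> 'a) \<Rightarrow> real) \<Rightarrow> nat \<Rightarrow> (nat \<Rightarrow> 'a) \<Rightarrow> (nat \<Rightarrow> nat \<Rightarrow> nat) \<Rightarrow> real" where
  "pbar T M x s = (\<Sum>m\<le>M. \<Sum>m'\<le>M.
              (if T (permute_vec (s m \<circ> inv (s m')) x) \<ge> T x then 1 else 0)) / (1 + real M)^2"

lemma pbar_cong: "(\<And>m. m \<le> M \<Longrightarrow> s m = t m) \<Longrightarrow> pbar T M x s = pbar T M x t"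
  unfolding pbar_def by (intro arg_cong2[where f="(/)"] sum.cong refl) auto

lemma pbar_meas:
  fixes N :: "'a measure"
  assumes T: "T \<in> borel_measurable (PiM {..<n} (\<lambda>_. N))"
    and s: "\<And>m. m \<le> M \<Longrightarrow> s m permutes {..<n}"
  shows "(\<lambda>x. pbar T M x s) \<in> borel_measurable (PiM {..<n} (\<lambda>_. N))"
proof -
  have tm: "(\<lambda>x. T (permute_vec (s m \<circ> inv (s m')) x)) \<in> borel_measurable (PiM {..<n} (\<lambda>_. N))"
    if "m \<le> M" "m' \<le> M" for m m'
    by (rule measurable_compose[OF pv_meas T])
      (intro permutes_compose permutes_inv s that)
  show ?thesis
    unfolding pbar_def
    by (intro borel_measurable_divide borel_measurable_const borel_measurable_sum measurable_If
        pred_intros_logic borel_measurable_le tm T) auto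
qed




lemma bounded_integrable:
  fixes f :: "'a \<Rightarrow> real"
  assumes "prob_space \<mu>" "f \<in> borel_measurable \<mu>" "\<And>x. x \<in> space \<mu> \<Longrightarrow> \<bar>f x\<bar> \<le> B"
  shows "integrable \<mu> f"
proof -
  interpret prob_space \<mu> by fact
  show ?thesis
    by (rule integrable_const_bound[where B=B]) (use assms in auto)
qed

lemma fixed_perm_bound:
  fixes \<mu> :: "(nat \<Rightarrow> 'a) measure" and N :: "'a measure"
  assumes mu: "prob_space \<mu>" and sets_mu: "sets \<mu> = sets (PiM {..<n} (\<lambda>_. N))"
    and exch: "\<And>\<pi>. \<pi> permutes {..<n} \<Longrightarrow> distr \<mu> (PiM {..<n} (\<lambda>_. N)) (permute_vec \<pi>) = \<mu>"
    and T: "T \<in> borel_measurable (PiM {..<n} (\<lambda>_. N))"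
    and s: "\<And>m. m \<le> M \<Longrightarrow> s m permutes {..<n}"
    and a: "0 \<le> \<alpha>"
  shows "measure \<mu> {x \<in> space \<mu>. pbar T M x s \<le> \<alpha>} \<le> 2*\<alpha>"
proof -
  interpret prob_space \<mu> by fact
  define S where "S = PiM {..<n} (\<lambda>_. N)"
  have mS: "measurable \<mu> K = measurable S K" for K :: "'b measure"
    unfolding S_def by (rule measurable_cong_sets[OF sets_mu refl])
  define Nr where "Nr = 1 + real M"
  have Nr: "Nr \<ge> 1" unfolding Nr_def by simp
  define w where "w m y = T (permute_vec (inv (s m)) y)" for m y
  define R where "R m y = real (card {j\<in>{..M}. w m y \<le> w j y})" for m y
  define p where "p m x = (\<Sum>m'\<le>M. if T (permute_vec (s m \<circ> inv (s m')) x) \<ge> T x then 1 else 0::real)" for m x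
  have pbar_eq: "pbar T M x s = (\<Sum>m\<le>M. p m x) / Nr\<^sup>2" for x
    by (simp add: pbar_def p_def Nr_def)
  have pR: "p m x = R m (permute_vec (s m) x)" if "m \<le> M" for m x
  proof -
    have e1: "T (permute_vec (s m \<circ> inv (s m')) x) = w m' (permute_vec (s m) x)" for m'
      by (simp add: w_def pv_comp)
    have "permute_vec (inv (s m)) (permute_vec (s m) x) = x"
      using permutes_inv_o(1)[OF s[OF that]] by (simp add: pv_comp pv_id)
    then have e2: "T x = w m (permute_vec (s m) x)" by (simp add: w_def)
    show ?thesis unfolding p_def R_def e1 e2 by (simp add: sum_ind_card)
  qed
  have R_bd: "1 \<le> R m y \<and> R m y \<le> Nr" if "m \<le> M" for m y
  proof -
    have "card {j\<in>{..M}. w m y \<le> w j y} \<le> card {..M}" by (rule card_mono) auto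
    moreover have "m \<in> {j\<in>{..M}. w m y \<le> w j y}" using that by auto
    then have "card {j\<in>{..M}. w m y \<le> w j y} \<ge> 1"
      using card_gt_0_iff[of "{j\<in>{..M}. w m y \<le> w j y}"] by fastforce
    ultimately show ?thesis by (simp add: R_def Nr_def)
  qed
  have w_meas: "w m \<in> borel_measurable S" if "m \<le> M" for m
    unfolding w_def S_def
    by (rule measurable_compose[OF pv_meas T]) (intro permutes_inv s that)
  have R_meas: "R m \<in> borel_measurable S" if "m \<le> M" for m
  proof -
    have "R m y = (\<Sum>j\<le>M. if w m y \<le> w j y then 1 else 0)" for y
      by (simp add: R_def sum_ind_card)
    then have "R m = (\<lambda>y. \<Sum>j\<le>M. if w m y \<le> w j y then 1 else 0)" by auto
    then show ?thesis
      by (simp only:) (intro borel_measurable_sum measurable_If borel_measurable_const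
          pred_intros_logic borel_measurable_le w_meas that; simp)
  qed
  have pvm: "permute_vec (s m) \<in> \<mu> \<rightarrow>\<^sub>M S" if "m \<le> M" for m
    unfolding mS S_def by (rule pv_meas[OF s[OF that]])
  define E where "E = {x \<in> space \<mu>. pbar T M x s \<le> \<alpha>}"
  have E_sets: "E \<in> sets \<mu>"
  proof -
    have "(\<lambda>x. pbar T M x s) \<in> borel_measurable \<mu>"
      unfolding mS S_def by (rule pbar_meas[OF T s])
    then show ?thesis unfolding E_def by measurable
  qed
  show ?thesis
  proof (cases "\<alpha> = 0")
    case True
    have "E = {}"
    proof -
      { fix x assume "x \<in> E"
        have "(\<Sum>m\<le>M. p m x) \<ge> p 0 x"
          by (rule member_le_sum) (auto simp: pR R_bd intro: order_trans[OF zero_le_one])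
        moreover have "p 0 x \<ge> 1" using R_bd[of 0] pR[of 0] by simp
        ultimately have "pbar T M x s > 0" using Nr by (simp add: pbar_eq)
        with \<open>x \<in> E\<close> True have False by (simp add: E_def) }
      then show ?thesis by auto
    qed
    then show ?thesis unfolding E_def[symmetric] using a by simp
  next
    case False
    then have apos: "\<alpha> > 0" using a by simp
    define c where "c = 2 * \<alpha> * Nr"
    have pt: "\<alpha> * indicator E x \<le> (\<Sum>m\<le>M. max 0 (c - p m x)) / Nr\<^sup>2" if "x \<in> space \<mu>" for x
    proof (cases "x \<in> E")
      case True
      then have "(\<Sum>m\<le>M. p m x) / Nr\<^sup>2 \<le> \<alpha>" by (simp add: E_def pbar_eq)
      then have sp: "(\<Sum>m\<le>M. p m x) \<le> \<alpha> * Nr\<^sup>2" using Nr by (simp add: field_simps)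
      have "(\<Sum>m\<le>M. c - p m x) \<le> (\<Sum>m\<le>M. max 0 (c - p m x))" by (intro sum_mono) auto
      moreover have "(\<Sum>m\<le>M. c - p m x) = c * Nr - (\<Sum>m\<le>M. p m x)"
        by (simp add: sum_subtractf Nr_def)
      ultimately have "\<alpha> * Nr\<^sup>2 \<le> (\<Sum>m\<le>M. max 0 (c - p m x))"
        using sp by (simp add: c_def power2_eq_square)
      then show ?thesis using True Nr by (simp add: field_simps)
    next
      case False
      then show ?thesis by (simp add: sum_nonneg)
    qed
    have int_m: "integrable \<mu> (\<lambda>x. max 0 (c - R m (permute_vec (s m) x)))" if "m \<le> M" for m
    proof (rule bounded_integrable[OF mu, where B="\<bar>c\<bar> + Nr"])
      show "(\<lambda>x. max 0 (c - R m (permute_vec (s m) x))) \<in> borel_measurable \<mu>"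
        using measurable_compose[OF pvm R_meas, OF that that] by measurable
      fix x show "\<bar>max 0 (c - R m (permute_vec (s m) x))\<bar> \<le> \<bar>c\<bar> + Nr"
        using R_bd[OF that, of "permute_vec (s m) x"] by (simp add: abs_if max_def)
    qed
    have int_p: "integrable \<mu> (\<lambda>x. max 0 (c - p m x))" if "m \<le> M" for m
      using int_m[OF that] by (simp add: pR[OF that])
    have int_y: "integrable \<mu> (\<lambda>y. max 0 (c - R m y))" if "m \<le> M" for m
    proof (rule bounded_integrable[OF mu, where B="\<bar>c\<bar> + Nr"])
      show "(\<lambda>y. max 0 (c - R m y)) \<in> borel_measurable \<mu>"
        unfolding mS using R_meas[OF that] by measurable
      fix x show "\<bar>max 0 (c - R m x)\<bar> \<le> \<bar>c\<bar> + Nr"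
        using R_bd[OF that, of x] by (simp add: abs_if max_def)
    qed
    have trans: "(\<integral>x. max 0 (c - p m x) \<partial>\<mu>) = (\<integral>y. max 0 (c - R m y) \<partial>\<mu>)" if "m \<le> M" for m
    proof -
      have "(\<integral>x. max 0 (c - p m x) \<partial>\<mu>) = (\<integral>x. max 0 (c - R m (permute_vec (s m) x)) \<partial>\<mu>)"
        using pR[OF that] by simp
      also have "\<dots> = (\<integral>y. max 0 (c - R m y) \<partial>(distr \<mu> S (permute_vec (s m))))"
        by (rule integral_distr[symmetric, OF pvm[OF that]]) (use R_meas[OF that] in measurable)
      also have "distr \<mu> S (permute_vec (s m)) = \<mu>" unfolding S_def by (rule exch[OF s[OF that]])
      finally show ?thesis .
    qed
    have det: "(\<Sum>m\<le>M. max 0 (c - R m y)) \<le> c\<^sup>2/2" for y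
    proof -
      have "(\<Sum>m\<le>M. max 0 (c - R m y)) \<le> c\<^sup>2/2 - (max 0 (c - real (card {..M})))\<^sup>2/2"
        unfolding R_def by (rule rank_sum_bound) (use apos Nr in \<open>auto simp: c_def\<close>)
      moreover have "0 \<le> (max 0 (c - real (card {..M})))\<^sup>2" by simp
      ultimately show ?thesis by linarith
    qed
    have "\<alpha> * measure \<mu> E = (\<integral>x. \<alpha> * indicator E x \<partial>\<mu>)"
      using E_sets by simp
    also have "\<dots> \<le> (\<integral>x. (\<Sum>m\<le>M. max 0 (c - p m x)) / Nr\<^sup>2 \<partial>\<mu>)"
    proof (rule integral_mono)
      show "integrable \<mu> (\<lambda>x. \<alpha> * indicator E x)"
        using E_sets by (intro integrable_mult_right integrable_real_indicator) (auto simp: emeasure_eq_measure)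
      show "integrable \<mu> (\<lambda>x. (\<Sum>m\<le>M. max 0 (c - p m x)) / Nr\<^sup>2)"
        using int_p by (intro integrable_divide integrable_sum) auto
    qed (use pt in auto)
    also have "\<dots> = (\<Sum>m\<le>M. (\<integral>x. max 0 (c - p m x) \<partial>\<mu>)) / Nr\<^sup>2"
      using int_p by (simp add: integral_sum)
    also have "\<dots> = (\<Sum>m\<le>M. (\<integral>y. max 0 (c - R m y) \<partial>\<mu>)) / Nr\<^sup>2"
      using trans by simp
    also have "\<dots> = (\<integral>y. (\<Sum>m\<le>M. max 0 (c - R m y)) \<partial>\<mu>) / Nr\<^sup>2"
      using int_y by (simp add: integral_sum)
    also have "\<dots> \<le> (\<integral>y. c\<^sup>2/2 \<partial>\<mu>) / Nr\<^sup>2"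
      by (intro divide_right_mono integral_mono) (use det int_y in auto)
    also have "\<dots> = 2 * \<alpha> * \<alpha>"
      using Nr by (simp add: c_def power2_eq_square prob_space)
    finally have "\<alpha> * measure \<mu> E \<le> \<alpha> * (2 * \<alpha>)" by simp
    then show ?thesis using apos unfolding E_def by simp
  qed
qed




theorem theorem9:
  fixes P :: "'w measure" and N :: "'a measure" and n :: nat
    and X :: "'w \<Rightarrow> nat \<Rightarrow> 'a"
    and T :: "(nat \<Rightarrow> 'a) \<Rightarrow> real"
    and q :: "(nat \<Rightarrow> nat) pmf"
    and M :: nat
    and \<sigma> :: "nat \<Rightarrow> 'w \<Rightarrow> (nat \<Rightarrow> nat)"
    and \<alpha> :: real
  assumes "prob_space P"
    and X_rv: "X \<in> measurable P (PiM {..<n} (\<lambda>_. N))"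
    and exch: "exchangeable_rv P n N X"
    and T_meas: "T \<in> borel_measurable (PiM {..<n} (\<lambda>_. N))"
    and q_perm: "set_pmf q \<subseteq> {\<pi>. \<pi> permutes {..<n}}"
    and M_ge: "M \<ge> 1"
    and \<sigma>_rv: "\<And>m. m \<le> M \<Longrightarrow> \<sigma> m \<in> measurable P (count_space UNIV)"
    and \<sigma>_distr: "\<And>m. m \<le> M \<Longrightarrow> distr P (count_space UNIV) (\<sigma> m) = measure_pmf q"
    and \<sigma>_indep: "prob_space.indep_vars P (\<lambda>_. count_space UNIV) \<sigma> {..M}"
    and X_indep: "distr P (PiM {..<n} (\<lambda>_. N) \<Otimes>\<^sub>M PiM {..M} (\<lambda>_. count_space UNIV))
                    (\<lambda>\<omega>. (X \<omega>, \<lambda>m\<in>{..M}. \<sigma> m \<omega>))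
                  = distr P (PiM {..<n} (\<lambda>_. N)) X
                    \<Otimes>\<^sub>M distr P (PiM {..M} (\<lambda>_. count_space UNIV)) (\<lambda>\<omega>. \<lambda>m\<in>{..M}. \<sigma> m \<omega>)"
    and \<alpha>_range: "0 \<le> \<alpha>" "\<alpha> \<le> 1"
  shows "measure P {\<omega> \<in> space P.
           (\<Sum>m\<le>M. \<Sum>m'\<le>M.
              (if T (permute_vec (\<sigma> m \<omega> \<circ> inv (\<sigma> m' \<omega>)) (X \<omega>)) \<ge> T (X \<omega>) then 1 else 0))
             / (1 + real M)^2 \<le> \<alpha>} \<le> 2 * \<alpha>"
proof -
  interpret P: prob_space P by fact
  define S where "S = PiM {..<n} (\<lambda>_. N)"
  define V where "V = (PiM {..M} (\<lambda>_. count_space UNIV) :: (nat \<Rightarrow> nat \<Rightarrow> nat) measure)"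
  define \<sigma>v where "\<sigma>v \<omega> = (\<lambda>m\<in>{..M}. \<sigma> m \<omega>)" for \<omega>
  define \<mu> where "\<mu> = distr P S X"
  define \<nu> where "\<nu> = distr P V \<sigma>v"
  define Perm where "Perm = {\<pi>::nat\<Rightarrow>nat. \<pi> permutes {..<n}}"
  define c where "c f = (if f permutes {..<n} then f else id)" for f :: "nat \<Rightarrow> nat"
  have c_perm: "c f permutes {..<n}" for f by (simp add: c_def permutes_id)
  define B where "B = {z \<in> space (S \<Otimes>\<^sub>M V). pbar T M (fst z) (c \<circ> snd z) \<le> \<alpha>}"
  define A where "A = {\<omega> \<in> space P.
           (\<Sum>m\<le>M. \<Sum>m'\<le>M.
              (if T (permute_vec (\<sigma> m \<omega> \<circ> inv (\<sigma> m' \<omega>)) (X \<omega>)) \<ge> T (X \<omega>) then 1 else 0))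
             / (1 + real M)^2 \<le> \<alpha>}"
  define A1 where "A1 = {\<omega> \<in> space P. pbar T M (X \<omega>) (c \<circ> \<sigma>v \<omega>) \<le> \<alpha>}"
  have \<sigma>v_meas: "\<sigma>v \<in> P \<rightarrow>\<^sub>M V"
    unfolding \<sigma>v_def V_def by (rule measurable_restrict) (use \<sigma>_rv in auto)
  have f_meas: "(\<lambda>\<omega>. (X \<omega>, \<sigma>v \<omega>)) \<in> P \<rightarrow>\<^sub>M S \<Otimes>\<^sub>M V"
    using X_rv \<sigma>v_meas unfolding S_def by measurable
  have mu_prob: "prob_space \<mu>" unfolding \<mu>_def by (rule P.prob_space_distr) (use X_rv S_def in simp)
  have nu_prob: "prob_space \<nu>" unfolding \<nu>_def by (rule P.prob_space_distr) (use \<sigma>v_meas in simp)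
  have prod: "distr P (S \<Otimes>\<^sub>M V) (\<lambda>\<omega>. (X \<omega>, \<sigma>v \<omega>)) = \<mu> \<Otimes>\<^sub>M \<nu>"
    using X_indep unfolding S_def V_def \<sigma>v_def \<mu>_def \<nu>_def by simp
  have B_sets: "B \<in> sets (S \<Otimes>\<^sub>M V)"
  proof -
    define Tup where "Tup = PiE {..M} (\<lambda>_. Perm)"
    have fin: "finite Tup" unfolding Tup_def Perm_def
      by (intro finite_PiE finite_permutations) auto
    have eq: "B = (\<Union>t\<in>Tup. {x \<in> space S. pbar T M x t \<le> \<alpha>} \<times> {v \<in> space V. \<forall>m\<in>{..M}. c (v m) = t m})"
    proof (intro equalityI subsetI)
      fix z assume z: "z \<in> B"
      obtain x v where zxv: "z = (x, v)" by (cases z)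
      define t where "t = restrict (c \<circ> v) {..M}"
      have "t \<in> Tup" unfolding t_def Tup_def Perm_def using c_perm by auto
      moreover have "pbar T M x t = pbar T M x (c \<circ> v)" by (rule pbar_cong) (simp add: t_def)
      moreover have "x \<in> space S" "v \<in> space V" "pbar T M x (c \<circ> v) \<le> \<alpha>"
        using z zxv unfolding B_def by (auto simp: space_pair_measure)
      moreover have "\<forall>m\<in>{..M}. c (v m) = t m" by (simp add: t_def)
      ultimately show "z \<in> (\<Union>t\<in>Tup. {x \<in> space S. pbar T M x t \<le> \<alpha>} \<times> {v \<in> space V. \<forall>m\<in>{..M}. c (v m) = t m})"
        unfolding zxv by (intro UN_I[of t]) auto
    next
      fix z assume "z \<in> (\<Union>t\<in>Tup. {x \<in> space S. pbar T M x t \<le> \<alpha>} \<times> {v \<in> space V. \<forall>m\<in>{..M}. c (v m) = t m})"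
      then obtain t x v where z: "z = (x, v)" "x \<in> space S" "pbar T M x t \<le> \<alpha>" "v \<in> space V"
        "\<forall>m\<in>{..M}. c (v m) = t m" by auto
      have "pbar T M x (c \<circ> v) = pbar T M x t" by (rule pbar_cong) (use z in auto)
      then show "z \<in> B" using z unfolding B_def by (auto simp: space_pair_measure)
    qed
    show ?thesis unfolding eq
    proof (intro sets.finite_UN fin ballI pair_measureI)
      fix t assume "t \<in> Tup"
      then have tp: "m \<le> M \<Longrightarrow> t m permutes {..<n}" for m unfolding Tup_def Perm_def by auto
      have "(\<lambda>x. pbar T M x t) \<in> borel_measurable S"
        unfolding S_def by (rule pbar_meas[OF T_meas tp])
      then show "{x \<in> space S. pbar T M x t \<le> \<alpha>} \<in> sets S" by measurable
      have "{v \<in> space V. c (v m) = t m} \<in> sets V" if "m \<in> {..M}" for m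
      proof -
        have "(\<lambda>v. v m) \<in> V \<rightarrow>\<^sub>M count_space UNIV"
          unfolding V_def using that by (rule measurable_component_singleton)
        then have "(\<lambda>v. v m) -` (c -` {t m}) \<inter> space V \<in> sets V"
          by (rule measurable_sets) simp
        moreover have "(\<lambda>v. v m) -` (c -` {t m}) \<inter> space V = {v \<in> space V. c (v m) = t m}" by auto
        ultimately show ?thesis by simp
      qed
      then have "(\<Inter>m\<in>{..M}. {v \<in> space V. c (v m) = t m}) \<in> sets V"
        by (intro sets.finite_INT) auto
      moreover have "(\<Inter>m\<in>{..M}. {v \<in> space V. c (v m) = t m}) = {v \<in> space V. \<forall>m\<in>{..M}. c (v m) = t m}"
        by auto
      ultimately show "{v \<in> space V. \<forall>m\<in>{..M}. c (v m) = t m} \<in> sets V" by simp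
    qed
  qed
  have A1_eq: "A1 = (\<lambda>\<omega>. (X \<omega>, \<sigma>v \<omega>)) -` B \<inter> space P"
    using measurable_space[OF f_meas] unfolding A1_def B_def by auto
  have A1_sets: "A1 \<in> sets P" unfolding A1_eq by (rule measurable_sets[OF f_meas B_sets])
  have A1_meas: "measure P A1 = measure (\<mu> \<Otimes>\<^sub>M \<nu>) B"
    unfolding A1_eq prod[symmetric] by (rule measure_distr[symmetric, OF f_meas B_sets])
  have exch_mu: "distr \<mu> S (permute_vec \<pi>) = \<mu>" if "\<pi> permutes {..<n}" for \<pi>
  proof -
    have "distr \<mu> S (permute_vec \<pi>) = distr P S (\<lambda>\<omega>. permute_vec \<pi> (X \<omega>))"
      unfolding \<mu>_def S_def
      by (subst distr_distr) (use pv_meas[OF that] X_rv in \<open>auto simp: comp_def\<close>)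
    also have "\<dots> = \<mu>" using exch that unfolding exchangeable_rv_def \<mu>_def S_def by auto
    finally show ?thesis .
  qed
  have slice: "emeasure \<mu> ((\<lambda>x. (x, v)) -` B) \<le> ennreal (2 * \<alpha>)" if "v \<in> space \<nu>" for v
  proof -
    have vV: "v \<in> space V" using that unfolding \<nu>_def by simp
    have "(\<lambda>x. (x, v)) -` B = {x \<in> space \<mu>. pbar T M x (c \<circ> v) \<le> \<alpha>}"
      using vV unfolding B_def \<mu>_def by (auto simp: space_pair_measure)
    moreover have "measure \<mu> {x \<in> space \<mu>. pbar T M x (c \<circ> v) \<le> \<alpha>} \<le> 2 * \<alpha>"
      by (rule fixed_perm_bound[OF mu_prob _ _ T_meas])
         (use exch_mu c_perm \<alpha>_range in \<open>auto simp: \<mu>_def S_def\<close>)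
    ultimately show ?thesis
      using finite_measure.emeasure_eq_measure[OF prob_space.axioms(1)[OF mu_prob]] by (simp add: ennreal_leI)
  qed
  have pair_sf: "pair_sigma_finite \<mu> \<nu>"
    unfolding pair_sigma_finite_def
    using prob_space_imp_sigma_finite[OF mu_prob] prob_space_imp_sigma_finite[OF nu_prob] by simp
  have "emeasure (\<mu> \<Otimes>\<^sub>M \<nu>) B = (\<integral>\<^sup>+ v. emeasure \<mu> ((\<lambda>x. (x, v)) -` B) \<partial>\<nu>)"
    by (rule pair_sigma_finite.emeasure_pair_measure_alt2[OF pair_sf])
       (use B_sets in \<open>simp add: \<mu>_def \<nu>_def\<close>)
  also have "\<dots> \<le> (\<integral>\<^sup>+ v. ennreal (2 * \<alpha>) \<partial>\<nu>)"
    by (rule nn_integral_mono) (rule slice)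
  also have "\<dots> = ennreal (2 * \<alpha>)"
    using prob_space.emeasure_space_1[OF nu_prob] by simp
  finally have "ennreal (measure (\<mu> \<Otimes>\<^sub>M \<nu>) B) \<le> ennreal (2 * \<alpha>)"
    using finite_measure.emeasure_eq_measure[OF prob_space.axioms(1)[OF prob_space_pair[OF mu_prob nu_prob]]] by simp
  then have B_bd: "measure (\<mu> \<Otimes>\<^sub>M \<nu>) B \<le> 2 * \<alpha>"
    using \<alpha>_range by (simp add: ennreal_le_iff)
  have AE_perm: "AE \<omega> in P. \<forall>m\<in>{..M}. \<sigma> m \<omega> permutes {..<n}"
  proof (rule AE_finite_allI)
    fix m assume m: "m \<in> {..M}"
    have "AE f in distr P (count_space UNIV) (\<sigma> m). f permutes {..<n}"
      unfolding \<sigma>_distr[of m, OF m[simplified]] AE_measure_pmf_iff using q_perm by auto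
    then show "AE \<omega> in P. \<sigma> m \<omega> permutes {..<n}"
      by (rule AE_distrD[OF \<sigma>_rv[of m, OF m[simplified]]])
  qed simp
  show ?thesis
  proof (cases "A \<in> sets P")
    case False
    then show ?thesis using \<alpha>_range unfolding A_def[symmetric] by (simp add: measure_notin_sets)
  next
    case True
    have "measure P A \<le> measure P A1"
    proof (rule P.finite_measure_mono_AE[OF _ A1_sets])
      show "AE x\<in>A in P. x \<in> A1"
        using AE_perm
      proof eventually_elim
        case (elim \<omega>)
        show ?case
        proof
          assume "\<omega> \<in> A"
          then have "pbar T M (X \<omega>) (\<lambda>m. \<sigma> m \<omega>) \<le> \<alpha>" "\<omega> \<in> space P"
            unfolding A_def pbar_def by auto
          moreover have "pbar T M (X \<omega>) (c \<circ> \<sigma>v \<omega>) = pbar T M (X \<omega>) (\<lambda>m. \<sigma> m \<omega>)"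
            by (rule pbar_cong) (use elim in \<open>auto simp: c_def \<sigma>v_def\<close>)
          ultimately show "\<omega> \<in> A1" unfolding A1_def by simp
        qed
      qed
    qed
    then show ?thesis using A1_meas B_bd unfolding A_def by simp
  qed
qed


end
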